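(* Let $f(z)=\sum_{j\ge0}a_jz^j\in\mathcal B_0$. Then \[|a_1|^2+|a_2|^2\le\frac{32}{e^4},\qquad |a_1|^2+|a_2|^2+|a_3|^2\le\frac{27}{2e^3},\] \[|a_1|^2+|a_2|^2+|a_3|^2+|a_4|^2\le\frac{96(33-19\sqrt3)e^{2\sqrt3}}{e^6}.\] In each estimate, equality holds for $f(z)=\exp\big(t\frac{z-1}{z+1}\big)$ for some $t>0$.
   Context: $\mathbb D$ is the open unit disc; $\mathcal B_0=\{f$ holomorphic on $\mathbb D: 0<|f(z)|\le1$ for all $z\in\mathbb D\}$. *)

theory Defs
  imports "HOL-Complex_Analysis.Complex_Analysis"
begin

definition B0 :: "(complex \<Rightarrow> complex) set" where
  "B0 = {f. f holomorphic_on ball 0 1 \<and> (\<forall>z\<in>ball 0 1. 0 < norm (f z) \<and> norm (f z) \<le> 1)}"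

definition taylor_coeff :: "(complex \<Rightarrow> complex) \<Rightarrow> nat \<Rightarrow> complex" where
  "taylor_coeff f j = (deriv ^^ j) f 0 / fact j"

definition extremal :: "real \<Rightarrow> complex \<Rightarrow> complex" where
  "extremal t z = exp (of_real t * ((z - 1) / (z + 1)))"

end

theory Submission
  imports Defs
begin


lemma tc_cong:
  assumes "\<And>z. z \<in> ball 0 1 \<Longrightarrow> u z = v z"
  shows "taylor_coeff u k = taylor_coeff v k"
proof -
  have "eventually (\<lambda>z. u z = v z) (nhds (0::complex))"
    using eventually_nhds_in_open[of "ball 0 1" 0] assms by (auto elim!: eventually_mono)
  then show ?thesis unfolding taylor_coeff_def by (simp add: higher_deriv_cong_ev)
qed

lemma tc_0: "taylor_coeff u 0 = u 0"
  by (simp add: taylor_coeff_def)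

lemma tc_const: "taylor_coeff (\<lambda>z. c) k = (if k = 0 then c else 0)"
  by (simp add: taylor_coeff_def)

lemma tc_cmult:
  assumes "u holomorphic_on ball 0 1"
  shows "taylor_coeff (\<lambda>z. c * u z) k = c * taylor_coeff u k"
  using higher_deriv_cmult[OF assms, of 0 k c] by (simp add: taylor_coeff_def)

lemma tc_add:
  assumes "u holomorphic_on ball 0 1" "v holomorphic_on ball 0 1"
  shows "taylor_coeff (\<lambda>z. u z + v z) k = taylor_coeff u k + taylor_coeff v k"
  using higher_deriv_add[OF assms, of 0 k] by (simp add: taylor_coeff_def add_divide_distrib)

lemma tc_mult:
  assumes "u holomorphic_on ball 0 1" "v holomorphic_on ball 0 1"
  shows "taylor_coeff (\<lambda>z. u z * v z) k = (\<Sum>i\<le>k. taylor_coeff u i * taylor_coeff v (k - i))"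
proof -
  have "taylor_coeff (\<lambda>z. u z * v z) k =
     (\<Sum>i = 0..k. of_nat (k choose i) * (deriv ^^ i) u 0 * (deriv ^^ (k-i)) v 0) / fact k"
    using higher_deriv_mult[OF assms, of 0 k] by (simp add: taylor_coeff_def)
  also have "\<dots> = (\<Sum>i = 0..k. of_nat (k choose i) * (deriv ^^ i) u 0 * (deriv ^^ (k-i)) v 0 / fact k)"
    by (simp add: sum_divide_distrib)
  also have "\<dots> = (\<Sum>i\<le>k. taylor_coeff u i * taylor_coeff v (k - i))"
    unfolding atMost_atLeast0[symmetric]
  proof (rule sum.cong[OF refl])
    fix i assume "i \<in> {..k}"
    then have ik: "i \<le> k" by simp
    have "(of_nat (k choose i) :: complex) = fact k / (fact i * fact (k - i))"
      using binomial_fact[OF ik] by simp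
    then show "of_nat (k choose i) * (deriv ^^ i) u 0 * (deriv ^^ (k-i)) v 0 / fact k =
       taylor_coeff u i * taylor_coeff v (k - i)"
      by (simp add: taylor_coeff_def field_simps)
  qed
  finally show ?thesis .
qed

lemma tc_ident: "taylor_coeff (\<lambda>z. z) k = (if k = 1 then 1 else 0)"
  by (simp add: taylor_coeff_def)

lemma tc_power: "taylor_coeff (\<lambda>z. z ^ n) k = (if k = n then 1 else 0)"
proof -
  have "(deriv ^^ k) (\<lambda>w. (w - 0) ^ n) 0 = pochhammer (of_nat (Suc n - k)) k * (0 - 0) ^ (n - k)"
    by (rule higher_deriv_power)
  then have h: "(deriv ^^ k) (\<lambda>w. w ^ n) (0::complex) = pochhammer (of_nat (Suc n - k)) k * 0 ^ (n - k)"
    by simp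
  show ?thesis
  proof (cases "k = n")
    case True then show ?thesis using h by (simp add: taylor_coeff_def pochhammer_fact[symmetric])
  next
    case False
    show ?thesis
    proof (cases "k < n")
      case True then show ?thesis using h False by (simp add: taylor_coeff_def)
    next
      case False2: False
      then have "Suc n - k = 0" using False by simp
      then show ?thesis using h False False2 by (simp add: taylor_coeff_def pochhammer_0_left)
    qed
  qed
qed

lemma tc_poly: "taylor_coeff (\<lambda>z. \<Sum>k\<le>m. d k * z ^ k) j = (if j \<le> m then d j else 0)"
proof (induction m)
  case 0
  then show ?case using tc_cmult[of "\<lambda>z. z^0" "d 0" j] by (simp add: tc_const)
next
  case (Suc m)
  have "taylor_coeff (\<lambda>z. \<Sum>k\<le>Suc m. d k * z ^ k) j =
        taylor_coeff (\<lambda>z. (\<Sum>k\<le>m. d k * z ^ k) + d (Suc m) * z ^ Suc m) j" by simp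
  also have "\<dots> = taylor_coeff (\<lambda>z. \<Sum>k\<le>m. d k * z ^ k) j + taylor_coeff (\<lambda>z. d (Suc m) * z ^ Suc m) j"
    by (rule tc_add) (auto intro!: holomorphic_intros)
  also have "\<dots> = (if j \<le> m then d j else 0) + d (Suc m) * taylor_coeff (\<lambda>z. z ^ Suc m) j"
    by (subst tc_cmult) (auto intro!: holomorphic_intros simp: Suc)
  also have "\<dots> = (if j \<le> m then d j else 0) + d (Suc m) * (if j = Suc m then 1 else 0)"
    by (simp only: tc_power)
  also have "\<dots> = (if j \<le> Suc m then d j else 0)"
    by (cases "j \<le> m"; cases "j = Suc m") auto
  finally show ?case .
qed

lemma tc_shift:
  assumes "H holomorphic_on ball 0 1"
  shows "taylor_coeff (\<lambda>z. a + z * H z) (Suc k) = taylor_coeff H k"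
proof -
  have "taylor_coeff (\<lambda>z. a + z * H z) (Suc k) = taylor_coeff (\<lambda>z. a) (Suc k) + taylor_coeff (\<lambda>z. z * H z) (Suc k)"
    by (rule tc_add) (auto intro!: holomorphic_intros assms)
  also have "\<dots> = (\<Sum>i\<le>Suc k. taylor_coeff (\<lambda>z. z) i * taylor_coeff H (Suc k - i))"
    by (simp add: tc_const tc_mult assms)
  also have "\<dots> = (\<Sum>i\<in>{1}. taylor_coeff (\<lambda>z. z) i * taylor_coeff H (Suc k - i))"
    by (rule sum.mono_neutral_right) (auto simp: tc_ident)
  finally show ?thesis by (simp add: tc_ident)
qed




lemma cnj_circ:
  fixes r :: real and x :: real
  shows "cnj (circlepath 0 r x) * circlepath 0 r x = of_real (r^2)"
proof -
  have "cnj (circlepath 0 r x) * circlepath 0 r x = of_real ((cmod (circlepath 0 r x))^2)"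
    by (subst complex_norm_square) (simp add: mult.commute)
  also have "cmod (circlepath 0 r x) = \<bar>r\<bar>"
    by (simp add: circlepath norm_mult)
  finally show ?thesis by simp
qed

lemma coeff_integral:
  assumes g: "g holomorphic_on ball 0 1" and r: "0 < r" "r < 1"
  shows "((\<lambda>x. g (circlepath 0 r x) * cnj (circlepath 0 r x) ^ k) has_integral
            (taylor_coeff g k * of_real r ^ (2 * k))) {0..1}"
proof -
  have sub: "cball 0 r \<subseteq> ball (0::complex) 1" using r by auto
  have contf: "continuous_on (cball 0 r) g"
    using holomorphic_on_imp_continuous_on[OF g] continuous_on_subset sub by blast
  have holf: "g holomorphic_on ball 0 r"
    using g by (rule holomorphic_on_subset) (use r in auto)
  have C: "((\<lambda>u. g u / (u - 0) ^ (Suc k)) has_contour_integral ((2 * pi * \<i>) / (fact k) * (deriv ^^ k) g 0))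
           (circlepath 0 r)"
    by (rule Cauchy_has_contour_integral_higher_derivative_circlepath[OF contf holf]) (use r in auto)
  then have C1: "((\<lambda>x. g (circlepath 0 r x) / (circlepath 0 r x) ^ (Suc k) *
            vector_derivative (circlepath 0 r) (at x within {0..1}))
        has_integral ((2 * pi * \<i>) / (fact k) * (deriv ^^ k) g 0)) {0..1}"
    by (simp add: has_contour_integral_def)
  have C2: "((\<lambda>x. (of_real r ^ (2 * k) / (2 * pi * \<i>)) * (g (circlepath 0 r x) / (circlepath 0 r x) ^ (Suc k) *
            vector_derivative (circlepath 0 r) (at x within {0..1})))
        has_integral ((of_real r ^ (2 * k) / (2 * pi * \<i>)) * ((2 * pi * \<i>) / (fact k) * (deriv ^^ k) g 0))) {0..1}"
    by (rule has_integral_mult_right[OF C1])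
  have val: "(of_real r ^ (2 * k) / (2 * pi * \<i>)) * ((2 * pi * \<i>) / (fact k) * (deriv ^^ k) g 0)
      = taylor_coeff g k * of_real r ^ (2 * k)"
    by (simp add: taylor_coeff_def algebra_simps)
  have eq: "(of_real r ^ (2 * k) / (2 * pi * \<i>)) * (g (circlepath 0 r x) / (circlepath 0 r x) ^ (Suc k) *
            vector_derivative (circlepath 0 r) (at x within {0..1}))
        = g (circlepath 0 r x) * cnj (circlepath 0 r x) ^ k" if x: "x \<in> {0..1}" for x
  proof -
    define w where "w = circlepath 0 r x"
    have vd: "vector_derivative (circlepath 0 r) (at x within {0..1}) = 2 * pi * \<i> * w"
    proof -
      have "vector_derivative (circlepath 0 r) (at x within {0..1}) = 2 * pi * \<i> * r * exp(2 * of_real pi * \<i> * x)"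
        using x by (intro vector_derivative_circlepath01) auto
      moreover have "w = r * exp(2 * of_real pi * \<i> * x)" by (simp add: w_def circlepath)
      ultimately show ?thesis by simp
    qed
    have wnz: "w \<noteq> 0" using r by (simp add: w_def circlepath)
    have cw: "cnj w = of_real (r^2) / w" using cnj_circ[of r x] wnz
      by (simp add: w_def eq_divide_eq)
    have "(of_real r ^ (2 * k) / (2 * pi * \<i>)) * (g w / w ^ (Suc k) * (2 * pi * \<i> * w))
        = g w * (of_real r ^ (2 * k) / w ^ k)"
      using wnz by (simp add: divide_simps) (simp add: algebra_simps)
    also have "\<dots> = g w * cnj w ^ k"
      by (simp add: cw power_divide power_mult)
    finally show ?thesis by (simp add: vd w_def)
  qed
  show ?thesis
    using has_integral_eq[OF eq C2] unfolding val .
qed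




lemma pair_integral:
  assumes g: "g holomorphic_on ball 0 1" and r: "0 < r" "r < 1"
  shows "((\<lambda>x. g (circlepath 0 r x) * cnj (\<Sum>k\<le>m. d k * circlepath 0 r x ^ k)) has_integral
            (\<Sum>k\<le>m. taylor_coeff g k * cnj (d k) * of_real r ^ (2 * k))) {0..1}"
proof -
  have "((\<lambda>x. \<Sum>k\<le>m. cnj (d k) * (g (circlepath 0 r x) * cnj (circlepath 0 r x) ^ k)) has_integral
            (\<Sum>k\<le>m. cnj (d k) * (taylor_coeff g k * of_real r ^ (2 * k)))) {0..1}"
    by (intro has_integral_sum finite_atMost has_integral_mult_right coeff_integral[OF g r])
  then show ?thesis
    by (simp add: sum_distrib_left algebra_simps)
qed

lemma re_norm_sq: "Re (a * cnj a) = (cmod a)^2"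
  by (simp add: complex_norm_square[symmetric])

lemma lemmaL:
  assumes w: "\<omega> holomorphic_on ball 0 1" "\<And>z. z \<in> ball 0 1 \<Longrightarrow> norm (\<omega> z) \<le> 1"
      and h: "h holomorphic_on ball 0 1"
  shows "(\<Sum>k\<le>m. (cmod (taylor_coeff (\<lambda>z. \<omega> z * h z) k))^2) \<le> (\<Sum>k\<le>m. (cmod (taylor_coeff h k))^2)"
proof -
  define p where "p = (\<lambda>z. \<Sum>k\<le>m. taylor_coeff h k * z^k)"
  define c where "c k = taylor_coeff (\<lambda>z. \<omega> z * h z) k" for k
  define q where "q = (\<lambda>z. \<Sum>k\<le>m. c k * z^k)"
  have holp: "p holomorphic_on ball 0 1" unfolding p_def by (intro holomorphic_intros)
  have holq: "q holomorphic_on ball 0 1" unfolding q_def by (intro holomorphic_intros)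
  have holwp: "(\<lambda>z. \<omega> z * p z) holomorphic_on ball 0 1" by (intro holomorphic_intros w holp)
  have tp: "taylor_coeff p k = (if k \<le> m then taylor_coeff h k else 0)" for k
    unfolding p_def by (rule tc_poly)
  have tq: "taylor_coeff q k = (if k \<le> m then c k else 0)" for k
    unfolding q_def by (rule tc_poly)
  have cp: "c k = taylor_coeff (\<lambda>z. \<omega> z * p z) k" if "k \<le> m" for k
    unfolding c_def using that by (simp add: tc_mult w h holp tp, intro sum.cong, auto)
  define P where "P r = (\<Sum>k\<le>m. (cmod (taylor_coeff h k))^2 * r^(2 * k))" for r :: real
  define Q where "Q r = (\<Sum>k\<le>m. (cmod (c k))^2 * r^(2 * k))" for r :: real
  have QP: "Q r \<le> P r" if r: "0 < r" "r < 1" for r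
  proof -
    let ?g = "circlepath 0 r"
    have pe: "\<And>z. (\<Sum>k\<le>m. taylor_coeff h k * z^k) = p z" by (simp add: p_def)
    have qe: "\<And>z. (\<Sum>k\<le>m. c k * z^k) = q z" by (simp add: q_def)
    have e1: "(\<Sum>k\<le>m. taylor_coeff (\<lambda>z. \<omega> z * p z) k * cnj (c k) * of_real r ^ (2 * k))
        = (\<Sum>k\<le>m. c k * cnj (c k) * of_real r ^ (2 * k))"
      by (intro sum.cong) (auto simp: cp)
    have e2: "(\<Sum>k\<le>m. taylor_coeff p k * cnj (taylor_coeff h k) * of_real r ^ (2 * k))
        = (\<Sum>k\<le>m. taylor_coeff h k * cnj (taylor_coeff h k) * of_real r ^ (2 * k))"
      by (intro sum.cong) (auto simp: tp)
    have e3: "(\<Sum>k\<le>m. taylor_coeff q k * cnj (c k) * of_real r ^ (2 * k))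
        = (\<Sum>k\<le>m. c k * cnj (c k) * of_real r ^ (2 * k))"
      by (intro sum.cong) (auto simp: tq)
    have I1: "((\<lambda>x. (\<omega> (?g x) * p (?g x)) * cnj (q (?g x))) has_integral
        (\<Sum>k\<le>m. c k * cnj (c k) * of_real r ^ (2 * k))) {0..1}"
      using pair_integral[OF holwp r, where m=m and d=c] unfolding e1 qe .
    have I2: "((\<lambda>x. p (?g x) * cnj (p (?g x))) has_integral
        (\<Sum>k\<le>m. taylor_coeff h k * cnj (taylor_coeff h k) * of_real r ^ (2 * k))) {0..1}"
      using pair_integral[OF holp r, where m=m and d="taylor_coeff h"] unfolding e2 pe .
    have I3: "((\<lambda>x. q (?g x) * cnj (q (?g x))) has_integral
        (\<Sum>k\<le>m. c k * cnj (c k) * of_real r ^ (2 * k))) {0..1}"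
      using pair_integral[OF holq r, where m=m and d=c] unfolding e3 qe .
    have ReI: "Re (\<Sum>k\<le>m. a k * cnj (a k) * of_real r ^ (2 * k)) = (\<Sum>k\<le>m. (cmod (a k))^2 * r^(2 * k))" for a
    proof -
      have "(\<Sum>k\<le>m. a k * cnj (a k) * of_real r ^ (2 * k)) = of_real (\<Sum>k\<le>m. (cmod (a k))^2 * r^(2 * k))"
      proof -
        have pw: "\<And>k. a k * cnj (a k) * of_real r ^ (2 * k) = of_real ((cmod (a k))^2 * r^(2 * k))"
          by (metis complex_norm_square of_real_mult of_real_power)
        show ?thesis by (simp only: pw of_real_sum)
      qed
      then show ?thesis by simp
    qed
    have J1: "((\<lambda>x. Re ((\<omega> (?g x) * p (?g x)) * cnj (q (?g x)))) has_integral Q r) {0..1}"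
      using has_integral_linear[OF I1 bounded_linear_Re] unfolding o_def ReI Q_def .
    have J2: "((\<lambda>x. ((cmod (p (?g x)))^2 + (cmod (q (?g x)))^2) / 2) has_integral ((P r + Q r) / 2)) {0..1}"
    proof -
      have a: "((\<lambda>x. (cmod (p (?g x)))^2) has_integral P r) {0..1}"
        using has_integral_linear[OF I2 bounded_linear_Re] unfolding o_def re_norm_sq ReI P_def .
      have b: "((\<lambda>x. (cmod (q (?g x)))^2) has_integral Q r) {0..1}"
        using has_integral_linear[OF I3 bounded_linear_Re] unfolding o_def re_norm_sq ReI Q_def .
      show ?thesis using has_integral_divide[OF has_integral_add[OF a b], of 2] by simp
    qed
    have pt: "Re ((\<omega> (?g x) * p (?g x)) * cnj (q (?g x))) \<le> ((cmod (p (?g x)))^2 + (cmod (q (?g x)))^2) / 2"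
      if "x \<in> {0..1}" for x
    proof -
      have gin: "?g x \<in> ball 0 1" using r by (simp add: circlepath norm_mult)
      have "Re ((\<omega> (?g x) * p (?g x)) * cnj (q (?g x))) \<le> cmod ((\<omega> (?g x) * p (?g x)) * cnj (q (?g x)))"
        by (rule complex_Re_le_cmod)
      also have "\<dots> = cmod (\<omega> (?g x)) * cmod (p (?g x)) * cmod (q (?g x))"
        by (simp add: norm_mult)
      also have "\<dots> \<le> 1 * cmod (p (?g x)) * cmod (q (?g x))"
        by (intro mult_right_mono w(2) gin) auto
      also have "\<dots> \<le> ((cmod (p (?g x)))^2 + (cmod (q (?g x)))^2) / 2"
        using sum_squares_bound[of "cmod (p (?g x))" "cmod (q (?g x))"]
        by (simp add: power2_eq_square)
      finally show ?thesis .
    qed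
    have "Q r \<le> (P r + Q r) / 2"
      by (rule has_integral_le[OF J1 J2 pt])
    then show ?thesis by simp
  qed
  have "Q 1 \<le> P 1"
  proof (rule tendsto_le[OF trivial_limit_at_left_real])
    show "(P \<longlongrightarrow> P 1) (at_left 1)" unfolding P_def
      by (intro tendsto_intros)
    show "(Q \<longlongrightarrow> Q 1) (at_left 1)" unfolding Q_def
      by (intro tendsto_intros)
    show "\<forall>\<^sub>F x in at_left 1. Q x \<le> P x"
      using eventually_at_left_real[of 0 "1::real"] by (auto elim!: eventually_mono intro: QP)
  qed
  then show ?thesis by (simp add: P_def Q_def c_def)
qed




lemma comp_hol:
  assumes "G holomorphic_on ball 0 1" "\<omega> holomorphic_on ball 0 1" "\<And>z. z \<in> ball 0 1 \<Longrightarrow> norm (\<omega> z) < 1"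
  shows "(\<lambda>z. G (\<omega> z)) holomorphic_on ball 0 1"
proof -
  have "(G \<circ> \<omega>) holomorphic_on ball 0 1"
    by (rule holomorphic_on_compose_gen[OF assms(2) assms(1)]) (use assms(3) in auto)
  then show ?thesis by (simp add: o_def)
qed

lemma rogosinski:
  assumes w: "\<omega> holomorphic_on ball 0 1" "\<omega> 0 = 0" "\<And>z. z \<in> ball 0 1 \<Longrightarrow> norm (\<omega> z) < 1"
  shows "G holomorphic_on ball 0 1 \<Longrightarrow>
    (\<Sum>k\<le>n. (cmod (taylor_coeff (\<lambda>z. G (\<omega> z)) k))^2) \<le> (\<Sum>k\<le>n. (cmod (taylor_coeff G k))^2)"
proof (induction n arbitrary: G)
  case 0
  then show ?case by (simp add: tc_0 w(2))
next
  case (Suc n)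
  have int: "0 \<in> interior (ball (0::complex) 1)" by simp
  define G1 where "G1 = (\<lambda>z. if z = 0 then deriv G 0 else (G z - G 0) / (z - 0))"
  have holG1: "G1 holomorphic_on ball 0 1" unfolding G1_def by (rule pole_lemma[OF Suc.prems int])
  have Geq: "G z = G 0 + z * G1 z" for z by (simp add: G1_def)
  define w1 where "w1 = (\<lambda>z. if z = 0 then deriv \<omega> 0 else (\<omega> z - \<omega> 0) / (z - 0))"
  have holw1: "w1 holomorphic_on ball 0 1" unfolding w1_def by (rule pole_lemma[OF w(1) int])
  have weq: "\<omega> z = z * w1 z" for z by (simp add: w1_def w(2))
  have no: "\<And>z. norm z < 1 \<Longrightarrow> norm (\<omega> z) < 1" using w(3) by simp
  have w1b: "norm (w1 z) \<le> 1" if "z \<in> ball 0 1" for z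
  proof (cases "z = 0")
    case True
    then show ?thesis using Schwarz_Lemma(2)[OF w(1) w(2) no, of 0] by (simp add: w1_def)
  next
    case False
    have "norm (\<omega> z) \<le> norm z" using Schwarz_Lemma(1)[OF w(1) w(2) no, of z] that by simp
    then show ?thesis using False by (simp add: w1_def w(2) norm_divide divide_le_eq_1)
  qed
  define H where "H = (\<lambda>z. w1 z * G1 (\<omega> z))"
  have holGw: "(\<lambda>z. G1 (\<omega> z)) holomorphic_on ball 0 1" by (rule comp_hol[OF holG1 w(1) w(3)])
  have holH: "H holomorphic_on ball 0 1" unfolding H_def by (intro holomorphic_intros holw1 holGw)
  have c1: "taylor_coeff (\<lambda>z. G (\<omega> z)) (Suc k) = taylor_coeff H k" for k
  proof -
    have "taylor_coeff (\<lambda>z. G (\<omega> z)) (Suc k) = taylor_coeff (\<lambda>z. G 0 + z * H z) (Suc k)"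
      by (rule tc_cong) (simp add: H_def, subst Geq, simp add: weq[symmetric])
    also have "\<dots> = taylor_coeff H k" by (rule tc_shift[OF holH])
    finally show ?thesis .
  qed
  have c2: "taylor_coeff G (Suc k) = taylor_coeff G1 k" for k
  proof -
    have "taylor_coeff G (Suc k) = taylor_coeff (\<lambda>z. G 0 + z * G1 z) (Suc k)"
      by (rule tc_cong) (subst Geq, simp)
    also have "\<dots> = taylor_coeff G1 k" by (rule tc_shift[OF holG1])
    finally show ?thesis .
  qed
  have "(\<Sum>k\<le>n. (cmod (taylor_coeff H k))^2) \<le> (\<Sum>k\<le>n. (cmod (taylor_coeff (\<lambda>z. G1 (\<omega> z)) k))^2)"
    unfolding H_def by (rule lemmaL[OF holw1 w1b holGw])
  also have "\<dots> \<le> (\<Sum>k\<le>n. (cmod (taylor_coeff G1 k))^2)" by (rule Suc.IH[OF holG1])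
  finally have le: "(\<Sum>k\<le>n. (cmod (taylor_coeff H k))^2) \<le> (\<Sum>k\<le>n. (cmod (taylor_coeff G1 k))^2)" .
  show ?case
    unfolding sum.atMost_Suc_shift c1 c2 using le by (simp add: tc_0 w(2))
qed




lemma ball_nz:
  assumes "z \<in> ball (0::complex) 1"
  shows "z + 1 \<noteq> 0"
proof
  assume "z + 1 = 0"
  then have "z = -1" by (simp add: eq_neg_iff_add_eq_0)
  then show False using assms by simp
qed

lemma ext_hol: "extremal t holomorphic_on ball 0 1"
proof -
  have "\<And>z::complex. z \<in> ball 0 1 \<Longrightarrow> z + 1 \<noteq> 0" by (rule ball_nz)
  then show ?thesis unfolding extremal_def by (intro holomorphic_intros) auto
qed

lemma ext_deriv:
  assumes z: "z \<in> ball 0 1"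
  shows "deriv (extremal t) z = extremal t z * (2 * of_real t / (z + 1)^2)"
proof -
  have nz: "z + 1 \<noteq> 0" by (rule ball_nz[OF z])
  have d1: "((\<lambda>z. z - 1) has_field_derivative 1) (at z)"
    by (auto intro!: derivative_eq_intros)
  have d2: "((\<lambda>z. z + 1) has_field_derivative 1) (at z)"
    by (auto intro!: derivative_eq_intros)
  have d3: "((\<lambda>z. (z - 1) / (z + 1)) has_field_derivative (1 * (z + 1) - (z - 1) * 1) / ((z + 1) * (z + 1))) (at z)"
    by (rule DERIV_divide[OF d1 d2 nz])
  have d4: "((\<lambda>z. of_real t * ((z - 1) / (z + 1))) has_field_derivative of_real t * ((1 * (z + 1) - (z - 1) * 1) / ((z + 1) * (z + 1)))) (at z)"
    by (rule DERIV_cmult[OF d3])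
  have d5: "(extremal t has_field_derivative exp (of_real t * ((z - 1) / (z + 1))) * (of_real t * ((1 * (z + 1) - (z - 1) * 1) / ((z + 1) * (z + 1))))) (at z)"
    unfolding extremal_def by (rule DERIV_chain2[OF DERIV_exp d4])
  have e: "exp (of_real t * ((z - 1) / (z + 1))) * (of_real t * ((1 * (z + 1) - (z - 1) * 1) / ((z + 1) * (z + 1))))
      = extremal t z * (2 * of_real t / (z + 1)^2)"
    by (simp add: extremal_def power2_eq_square)
  show ?thesis using d5 unfolding e by (rule DERIV_imp_deriv)
qed


definition pc :: "nat \<Rightarrow> complex" where
  "pc j = (if j = 0 then 1 else if j = 1 then 2 else if j = 2 then 1 else 0)"

lemma ode_coeff:
  "taylor_coeff (\<lambda>z. (\<Sum>j\<le>2. pc j * z^j) * deriv (extremal t) z) k = 2 * of_real t * taylor_coeff (extremal t) k"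
proof -
  have "taylor_coeff (\<lambda>z. (\<Sum>j\<le>2. pc j * z^j) * deriv (extremal t) z) k
      = taylor_coeff (\<lambda>z. 2 * of_real t * extremal t z) k"
  proof (rule tc_cong)
    fix z :: complex assume z: "z \<in> ball 0 1"
    have nz: "z + 1 \<noteq> 0" by (rule ball_nz[OF z])
    have "(\<Sum>j\<le>2. pc j * z^j) = (z + 1)^2"
      by (simp add: pc_def numeral_2_eq_2 power2_eq_square algebra_simps)
    then show "(\<Sum>j\<le>2. pc j * z^j) * deriv (extremal t) z = 2 * of_real t * extremal t z"
      using nz by (simp add: ext_deriv[OF z])
  qed
  also have "\<dots> = 2 * of_real t * taylor_coeff (extremal t) k"
    by (rule tc_cmult[OF ext_hol])
  finally show ?thesis .
qed

lemma tc_deriv: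
  "taylor_coeff (deriv f) k = of_nat (Suc k) * taylor_coeff f (Suc k)"
proof -
  have "(deriv ^^ Suc k) f = (deriv ^^ k) (deriv f)" by (simp only: funpow_Suc_right comp_apply)
  moreover have nz: "(of_nat (Suc k)::complex) \<noteq> 0" by (metis of_nat_eq_0_iff Zero_not_Suc)
  ultimately show ?thesis
    by (simp add: taylor_coeff_def del: of_nat_Suc)
qed

lemma ode_coeff2:
  "(\<Sum>i\<le>k. (if i \<le> 2 then pc i else 0) * (of_nat (Suc (k - i)) * taylor_coeff (extremal t) (Suc (k - i))))
     = 2 * of_real t * taylor_coeff (extremal t) k"
proof -
  have hd: "deriv (extremal t) holomorphic_on ball 0 1"
    by (rule holomorphic_deriv[OF ext_hol]) simp
  have "taylor_coeff (\<lambda>z. (\<Sum>j\<le>2. pc j * z^j) * deriv (extremal t) z) k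
      = (\<Sum>i\<le>k. taylor_coeff (\<lambda>z. \<Sum>j\<le>2. pc j * z^j) i * taylor_coeff (deriv (extremal t)) (k - i))"
    by (rule tc_mult) (auto intro!: holomorphic_intros hd)
  then show ?thesis using ode_coeff[of t k] by (simp add: tc_poly tc_deriv)
qed

lemma ext_coeffs:
  fixes t :: real
  defines "e \<equiv> exp (- t)"
  shows "taylor_coeff (extremal t) 1 = of_real (2 * t * e)"
    and "taylor_coeff (extremal t) 2 = of_real (2 * t * (t - 1) * e)"
    and "taylor_coeff (extremal t) 3 = of_real (2 * t * (2 * t^2 - 6 * t + 3) / 3 * e)"
    and "taylor_coeff (extremal t) 4 = of_real (2 * t * (t^3 - 6 * t^2 + 9 * t - 3) / 3 * e)"
proof -
  let ?A = "taylor_coeff (extremal t)"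
  have A0: "?A 0 = of_real e"
    by (simp add: tc_0 extremal_def e_def flip: exp_of_real)
  have r0: "?A 1 = 2 * of_real t * ?A 0"
    using ode_coeff2[of 0 t] by (simp add: pc_def)
  have lin: "\<And>c x y z. (c::complex) \<noteq> 0 \<Longrightarrow> c * x + y = z \<Longrightarrow> x = (z - y) / c"
    by (auto simp: field_simps)
  have r1: "2 * ?A (Suc (Suc 0)) + 2 * ?A (Suc 0) = 2 * of_real t * ?A (Suc 0)"
    using ode_coeff2[of 1 t] by (simp add: pc_def atMost_Suc numeral_2_eq_2 algebra_simps)
  have r2: "3 * ?A (Suc (Suc (Suc 0))) + (4 * ?A (Suc (Suc 0)) + ?A (Suc 0)) = 2 * of_real t * ?A (Suc (Suc 0))"
    using ode_coeff2[of 2 t] by (simp add: pc_def atMost_Suc numeral_2_eq_2 numeral_3_eq_3 algebra_simps)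
  have r3: "4 * ?A (Suc (Suc (Suc (Suc 0)))) + (6 * ?A (Suc (Suc (Suc 0))) + 2 * ?A (Suc (Suc 0))) = 2 * of_real t * ?A (Suc (Suc (Suc 0)))"
    using ode_coeff2[of 3 t] by (simp add: pc_def atMost_Suc numeral_2_eq_2 numeral_3_eq_3 eval_nat_numeral algebra_simps)
  show a1: "?A 1 = of_real (2 * t * e)" using r0 A0 by simp
  have a1': "?A (Suc 0) = of_real (2 * t * e)" using a1 by simp
  have a2': "?A (Suc (Suc 0)) = of_real (2 * t * (t - 1) * e)"
  proof -
    have "2 * ?A (Suc (Suc 0)) = 2 * of_real (2 * t * (t - 1) * e)"
      using r1 unfolding a1' by (simp add: algebra_simps)
    then show ?thesis by simp
  qed
  then show a2: "?A 2 = of_real (2 * t * (t - 1) * e)" by (simp add: numeral_2_eq_2)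
  have a3': "?A (Suc (Suc (Suc 0))) = of_real (2 * t * (2 * t^2 - 6 * t + 3) / 3 * e)"
  proof -
    have "3 * ?A (Suc (Suc (Suc 0))) = 2 * of_real t * of_real (2 * t * (t - 1) * e) - (4 * of_real (2 * t * (t - 1) * e) + of_real (2 * t * e))"
      using eq_diff_eq[THEN iffD2, OF r2] unfolding a1' a2' .
    also have "\<dots> = 3 * of_real (2 * t * (2 * t^2 - 6 * t + 3) / 3 * e)"
      by (simp add: field_simps power2_eq_square)
    finally have "3 * ?A (Suc (Suc (Suc 0))) = 3 * of_real (2 * t * (2 * t^2 - 6 * t + 3) / 3 * e)" .
    then show ?thesis by (metis mult_cancel_left zero_neq_numeral)
  qed
  then show a3: "?A 3 = of_real (2 * t * (2 * t^2 - 6 * t + 3) / 3 * e)" by (simp add: numeral_3_eq_3)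
  have a4': "?A (Suc (Suc (Suc (Suc 0)))) = of_real (2 * t * (t^3 - 6 * t^2 + 9 * t - 3) / 3 * e)"
  proof -
    have "4 * ?A (Suc (Suc (Suc (Suc 0)))) = 2 * of_real t * of_real (2 * t * (2 * t^2 - 6 * t + 3) / 3 * e) - (6 * of_real (2 * t * (2 * t^2 - 6 * t + 3) / 3 * e) + 2 * of_real (2 * t * (t - 1) * e))"
      using eq_diff_eq[THEN iffD2, OF r3] unfolding a2' a3' .
    also have "\<dots> = 4 * of_real (2 * t * (t^3 - 6 * t^2 + 9 * t - 3) / 3 * e)"
      by (simp add: field_simps power2_eq_square power3_eq_cube)
    finally have "4 * ?A (Suc (Suc (Suc (Suc 0)))) = 4 * of_real (2 * t * (t^3 - 6 * t^2 + 9 * t - 3) / 3 * e)" .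
    then show ?thesis by (metis mult_cancel_left zero_neq_numeral)
  qed
  then show "?A 4 = of_real (2 * t * (t^3 - 6 * t^2 + 9 * t - 3) / 3 * e)" by (simp add: eval_nat_numeral)
qed




lemma sum_split0:
  fixes n :: nat
  shows "(\<Sum>k\<le>n. f k) = f 0 + (\<Sum>k\<in>{1..n}. (f k :: real))"
proof -
  have "{..n} = insert 0 {1..n}" by auto
  then show ?thesis by simp
qed

lemma B0_reduce:
  assumes f: "f \<in> B0"
  shows "(\<forall>j\<ge>1. taylor_coeff f j = 0) \<or>
         (\<exists>t>0. \<forall>n. (\<Sum>j\<in>{1..n}. (cmod (taylor_coeff f j))\<^sup>2) \<le> (\<Sum>j\<in>{1..n}. (cmod (taylor_coeff (extremal t) j))\<^sup>2))"
proof (cases "\<exists>z0\<in>ball 0 1. cmod (f z0) = 1")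
  case True
  then obtain z0 where z0: "z0 \<in> ball 0 1" "cmod (f z0) = 1" by blast
  have holf: "f holomorphic_on ball 0 1" and fb: "\<And>z. z \<in> ball 0 1 \<Longrightarrow> 0 < cmod (f z) \<and> cmod (f z) \<le> 1"
    using f by (auto simp: B0_def)
  have "f constant_on ball 0 1"
    by (rule maximum_modulus_principle[OF holf open_ball connected_ball open_ball order_refl z0(1)])
       (use fb z0 in auto)
  then obtain c where c: "\<And>z. z \<in> ball 0 1 \<Longrightarrow> f z = c" by (auto simp: constant_on_def)
  have "taylor_coeff f j = 0" if "j \<ge> 1" for j
  proof -
    have "taylor_coeff f j = taylor_coeff (\<lambda>z. c) j" by (rule tc_cong) (simp add: c)
    then show ?thesis using that by (simp add: tc_const)
  qed
  then show ?thesis by blast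
next
  case False
  have holf: "f holomorphic_on ball 0 1" and fb: "\<And>z. z \<in> ball 0 1 \<Longrightarrow> 0 < cmod (f z) \<and> cmod (f z) \<le> 1"
    using f by (auto simp: B0_def)
  have flt: "cmod (f z) < 1" if "z \<in> ball 0 1" for z
    using fb[OF that] False that by force
  obtain g where holg: "g holomorphic_on ball 0 1" and fg: "\<And>z. z \<in> ball 0 1 \<Longrightarrow> f z = exp (g z)"
    using contractible_imp_holomorphic_log[OF holf convex_imp_contractible[OF convex_ball]] fb
    by (metis norm_zero order_less_irrefl)
  have Reg: "Re (g z) < 0" if "z \<in> ball 0 1" for z
    using flt[OF that] fg[OF that] by (simp add: norm_exp_eq_Re)
  define t where "t = - Re (g 0)"
  have t: "t > 0" using Reg[of 0] by (simp add: t_def)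
  define c where "c = exp (\<i> * of_real (Im (g 0)))"
  define h where "h z = (g z - \<i> * of_real (Im (g 0))) / of_real t" for z
  have Reh: "Re (h z) < 0" if "z \<in> ball 0 1" for z
    using Reg[OF that] t by (simp add: h_def Re_divide_of_real divide_neg_pos)
  have h0: "h 0 = -1"
    using t by (simp add: h_def t_def complex_eq_iff)
  have nz: "1 - h z \<noteq> 0" if "z \<in> ball 0 1" for z
    using Reh[OF that] by (auto simp: complex_eq_iff)
  define \<omega> where "\<omega> z = (1 + h z) / (1 - h z)" for z
  have holh: "h holomorphic_on ball 0 1" unfolding h_def by (intro holomorphic_intros holg) (use t in auto)
  have holw: "\<omega> holomorphic_on ball 0 1" unfolding \<omega>_def by (intro holomorphic_intros holh) (use nz in auto)
  have w0: "\<omega> 0 = 0" by (simp add: \<omega>_def h0)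
  have wlt: "cmod (\<omega> z) < 1" if z: "z \<in> ball 0 1" for z
  proof -
    have "(cmod (1 + h z))^2 < (cmod (1 - h z))^2"
      using Reh[OF z] by (simp only: cmod_power2) (simp add: power2_eq_square algebra_simps)
    then have "cmod (1 + h z) < cmod (1 - h z)"
      by (meson norm_ge_zero power_less_imp_less_base)
    then show ?thesis using nz[OF z] by (simp add: \<omega>_def norm_divide divide_less_eq)
  qed
  have feq: "f z = c * extremal t (\<omega> z)" if z: "z \<in> ball 0 1" for z
  proof -
    have "(\<omega> z - 1) / (\<omega> z + 1) = h z"
      using nz[OF z] by (simp add: \<omega>_def field_simps)
    then have "extremal t (\<omega> z) = exp (of_real t * h z)" by (simp add: extremal_def)
    also have "of_real t * h z = g z - \<i> * of_real (Im (g 0))" using t by (simp add: h_def)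
    finally have "c * extremal t (\<omega> z) = exp (\<i> * of_real (Im (g 0)) + (g z - \<i> * of_real (Im (g 0))))"
      by (simp add: c_def flip: exp_add)
    then show ?thesis using fg[OF z] by simp
  qed
  have holG: "(\<lambda>z. extremal t (\<omega> z)) holomorphic_on ball 0 1"
    by (rule comp_hol[OF ext_hol holw]) (use wlt in auto)
  have cf: "taylor_coeff f j = c * taylor_coeff (\<lambda>z. extremal t (\<omega> z)) j" for j
  proof -
    have "taylor_coeff f j = taylor_coeff (\<lambda>z. c * extremal t (\<omega> z)) j" by (rule tc_cong) (simp add: feq)
    also have "\<dots> = c * taylor_coeff (\<lambda>z. extremal t (\<omega> z)) j" by (rule tc_cmult[OF holG])
    finally show ?thesis .
  qed
  have nc: "cmod c = 1" by (simp add: c_def norm_exp_eq_Re)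
  have "(\<Sum>j\<in>{1..n}. (cmod (taylor_coeff f j))\<^sup>2) \<le> (\<Sum>j\<in>{1..n}. (cmod (taylor_coeff (extremal t) j))\<^sup>2)" for n
  proof -
    have R: "(\<Sum>k\<le>n. (cmod (taylor_coeff (\<lambda>z. extremal t (\<omega> z)) k))^2) \<le> (\<Sum>k\<le>n. (cmod (taylor_coeff (extremal t) k))^2)"
      by (rule rogosinski[OF holw w0 wlt ext_hol])
    have e0: "taylor_coeff (\<lambda>z. extremal t (\<omega> z)) 0 = taylor_coeff (extremal t) 0"
      by (simp add: tc_0 w0)
    have "(\<Sum>j\<in>{1..n}. (cmod (taylor_coeff f j))\<^sup>2) = (\<Sum>j\<in>{1..n}. (cmod (taylor_coeff (\<lambda>z. extremal t (\<omega> z)) j))\<^sup>2)"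
      by (simp add: cf norm_mult nc)
    also have "\<dots> \<le> (\<Sum>j\<in>{1..n}. (cmod (taylor_coeff (extremal t) j))\<^sup>2)"
      using R unfolding sum_split0[of _ n] e0 by simp
    finally show ?thesis .
  qed
  then show ?thesis using t by blast
qed




definition P2 :: "real \<Rightarrow> real" where "P2 t = (2 * t)^2 + (2 * t * (t-1))^2"
definition P3 :: "real \<Rightarrow> real" where "P3 t = P2 t + (2 * t * (2 * t^2-6 * t+3)/3)^2"
definition P4 :: "real \<Rightarrow> real" where "P4 t = P3 t + (2 * t * (t^3-6 * t^2+9 * t-3)/3)^2"

lemma d2: "((\<lambda>x. exp (-2 * x) * P2 x) has_real_derivative exp (-2 * x) * (-8 * x * (x-1)^2 * (x-2))) (at x)"
  unfolding P2_def
  apply (auto intro!: derivative_eq_intros)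
  apply algebra
  done

lemma d3: "((\<lambda>x. exp (-2 * x) * P3 x) has_real_derivative exp (-2 * x) * (x * (2 * x-3) * (x-3) * (8/9) * (3 - 9 * x + 9 * x^2 - 2 * x^3))) (at x)"
  unfolding P3_def P2_def
  apply (auto intro!: derivative_eq_intros)
  apply algebra
  done

lemma d4: "((\<lambda>x. exp (-2 * x) * P4 x) has_real_derivative exp (-2 * x) * (x * (x^2-6 * x+6) * (x-2) * (-8/9) * (x^4-8 * x^3+18 * x^2-12 * x+3))) (at x)"
  unfolding P4_def P3_def P2_def
  apply (auto intro!: derivative_eq_intros)
  apply algebra
  done

lemma peak:
  fixes \<phi> :: "real \<Rightarrow> real"
  assumes d: "\<And>x. (\<phi> has_real_derivative \<phi>' x) (at x)"
    and up: "\<And>x. a < x \<Longrightarrow> x < m \<Longrightarrow> \<phi>' x \<ge> 0"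
    and down: "\<And>x. m < x \<Longrightarrow> x < b \<Longrightarrow> \<phi>' x \<le> 0"
    and t: "a \<le> t" "t \<le> b"
  shows "\<phi> t \<le> \<phi> m"
proof -
  have cont: "continuous_on S \<phi>" for S
    using d by (meson DERIV_isCont continuous_at_imp_continuous_on)
  show ?thesis
  proof (cases "t \<le> m")
    case True
    show ?thesis
      by (rule DERIV_nonneg_imp_increasing_open[OF True _ cont]) (use d up t in force)
  next
    case False
    show ?thesis
      by (rule DERIV_nonpos_imp_decreasing_open[of m t, OF _ _ cont]) (use d down t False in force)+
  qed
qed

lemma exp_taylor_lb:
  fixes x :: real
  assumes "0 \<le> x"
  shows "(\<Sum>k\<le>N. x^k / fact k) \<le> exp x"
proof -
  have s: "(\<lambda>n. x^n / fact n) sums exp x"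
    using exp_converges[of x] by (simp add: divide_inverse_commute scaleR_conv_of_real mult.commute)
  have "(\<Sum>k\<le>N. x^k / fact k) \<le> (\<Sum>n. x^n / fact n)"
    by (rule sum_le_suminf) (use s assms in \<open>auto simp: sums_iff\<close>)
  then show ?thesis using s by (simp add: sums_iff)
qed

lemma exp_T7:
  fixes x :: real
  assumes "0 \<le> x"
  shows "1 + x + x^2/2 + x^3/6 + x^4/24 + x^5/120 + x^6/720 + x^7/5040 \<le> exp x"
  using exp_taylor_lb[OF assms, of 7] by (simp add: eval_nat_numeral fact_numeral)

lemma exp_T12:
  fixes x :: real
  assumes "0 \<le> x"
  shows "1 + x + x^2/2 + x^3/6 + x^4/24 + x^5/120 + x^6/720 + x^7/5040 + x^8/40320
     + x^9/362880 + x^10/3628800 + x^11/39916800 + x^12/479001600 \<le> exp x"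
  using exp_taylor_lb[OF assms, of 12] by (simp add: eval_nat_numeral fact_numeral)


lemma g3_nonneg:
  fixes x :: real
  assumes "0 \<le> x" "x \<le> 3"
  shows "0 \<le> 3 - 9 * x + 9 * x^2 - 2 * x^3"
proof (cases "x \<le> 1")
  case True
  have "x * (x * x) \<le> x * x" by (rule mult_left_le_one_le) (use True assms in auto)
  then have "x^3 \<le> x^2" by (simp add: power3_eq_cube power2_eq_square mult.assoc)
  moreover have "0 \<le> 7 * (x - 9/14)^2 + 3/28" by simp
  moreover have "7 * (x - 9/14)^2 + 3/28 = 3 - 9 * x + 7 * x^2" by algebra
  ultimately show ?thesis by linarith
next
  case False
  define w where "w = x - 1"
  have w: "0 \<le> w" "w \<le> 2" using False assms by (auto simp: w_def)
  have "w * (w * w) \<le> 2 * (w * w)" by (rule mult_right_mono) (use w in auto)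
  then have "w^3 \<le> 2 * w^2" by (simp add: power3_eq_cube power2_eq_square mult.assoc)
  moreover have "w^2 \<le> 2 * w" using w by (simp add: power2_eq_square mult_right_mono)
  moreover have "3 - 9 * x + 9 * x^2 - 2 * x^3 = 1 + 3 * w + 3 * w^2 - 2 * w^3" unfolding w_def by algebra
  ultimately show ?thesis using w by linarith
qed

lemma g4_nonneg:
  fixes x :: real
  assumes "0 \<le> x" "x \<le> 2"
  shows "0 \<le> x^4-8 * x^3+18 * x^2-12 * x+3"
proof -
  define s where "s = x - 1"
  have e: "x^4-8 * x^3+18 * x^2-12 * x+3 = 2 + 4 * s - 4 * s^3 + s^4" unfolding s_def by algebra
  show ?thesis
  proof (cases "s \<ge> 0")
    case True
    have s1: "s \<le> 1" using assms by (simp add: s_def)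
    have "s^3 \<le> s" using True s1
      by (simp add: power3_eq_cube) (metis mult_le_one mult_left_le_one_le mult_nonneg_nonneg mult.assoc)
    moreover have "0 \<le> s^4" by simp
    ultimately show ?thesis using e True by linarith
  next
    case False
    define u where "u = - s"
    have u: "0 \<le> u" using False by (simp add: u_def)
    have "0 \<le> 2 * u * (u-1/2)^2" using u by simp
    moreover have "0 \<le> 2 * (u-5/8)^2" by simp
    moreover have "2 * u * (u-1/2)^2 + 2 * (u-5/8)^2 + 7/32 = 2 * u^3 - 2 * u + 1" by algebra
    moreover have "0 \<le> u^4" by simp
    moreover have "2 + 4 * s - 4 * s^3 + s^4 = 2 - 4 * u + 4 * u^3 + u^4" unfolding u_def by algebra
    ultimately show ?thesis using e by linarith
  qed
qed

lemma tail3: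
  fixes u :: real
  assumes u: "0 \<le> u"
  shows "P3 (3+u) \<le> 27/2 * (1 + (3+2 * u) + (3+2 * u)^2/2 + (3+2 * u)^3/6 + (3+2 * u)^4/24 + (3+2 * u)^5/120 + (3+2 * u)^6/720 + (3+2 * u)^7/5040)"
proof -
  have "27/2 * (1 + (3+2 * u) + (3+2 * u)^2/2 + (3+2 * u)^3/6 + (3+2 * u)^4/24 + (3+2 * u)^5/120 + (3+2 * u)^6/720 + (3+2 * u)^7/5040) - P3 (3+u) = (29079/560) + (7371/80) * u + (264/5) * u^2 + (59/4) * u^3 + (35/3) * u^4 + (139/15) * u^5 + (136/45) * u^6 + (12/35) * u^7"
    unfolding P3_def P2_def by algebra
  moreover have "0 \<le> (29079/560) + (7371/80) * u + (264/5) * u^2 + (59/4) * u^3 + (35/3) * u^4 + (139/15) * u^5 + (136/45) * u^6 + (12/35) * u^7"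
    using u by (intro add_nonneg_nonneg mult_nonneg_nonneg zero_le_power) auto
  ultimately show ?thesis by linarith
qed

lemma tail4b:
  fixes u :: real
  assumes u: "0 \<le> u"
  shows "P4 (7/2+u) \<le> 42/5 * (1 + (9/2+2 * u) + (9/2+2 * u)^2/2 + (9/2+2 * u)^3/6 + (9/2+2 * u)^4/24 + (9/2+2 * u)^5/120 + (9/2+2 * u)^6/720 + (9/2+2 * u)^7/5040 + (9/2+2 * u)^8/40320 + (9/2+2 * u)^9/362880 + (9/2+2 * u)^10/3628800 + (9/2+2 * u)^11/39916800 + (9/2+2 * u)^12/479001600)"
proof -
  have "42/5 * (1 + (9/2+2 * u) + (9/2+2 * u)^2/2 + (9/2+2 * u)^3/6 + (9/2+2 * u)^4/24 + (9/2+2 * u)^5/120 + (9/2+2 * u)^6/720 + (9/2+2 * u)^7/5040 + (9/2+2 * u)^8/40320 + (9/2+2 * u)^9/362880 + (9/2+2 * u)^10/3628800 + (9/2+2 * u)^11/39916800 + (9/2+2 * u)^12/479001600) - P4 (7/2+u) = (68736793991/471859200) + (706724362237/1622016000) * u + (38855276047/73728000) * u^2 + (561691043/1843200) * u^3 + (143507761/1843200) * u^4 + (522323/57600) * u^5 + (1195441/144000) * u^6 + (114979/18000) * u^7 + (15193/7200) * u^8 + (493/1350) * u^9 + (1/27) * u^10 + (8/3375) * u^11 + (8/111375) * u^12"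
    unfolding P4_def P3_def P2_def by algebra
  moreover have "0 \<le> (68736793991/471859200) + (706724362237/1622016000) * u + (38855276047/73728000) * u^2 + (561691043/1843200) * u^3 + (143507761/1843200) * u^4 + (522323/57600) * u^5 + (1195441/144000) * u^6 + (114979/18000) * u^7 + (15193/7200) * u^8 + (493/1350) * u^9 + (1/27) * u^10 + (8/3375) * u^11 + (8/111375) * u^12"
    using u by (intro add_nonneg_nonneg mult_nonneg_nonneg zero_le_power) auto
  ultimately show ?thesis by linarith
qed

lemma tail4a:
  fixes s :: real
  assumes s: "0 \<le> s" "s \<le> 1"
  shows "P4 (2 + 3/2 * s) \<le> 42/5 * (1 + (3/2+3 * s) + (3/2+3 * s)^2/2 + (3/2+3 * s)^3/6 + (3/2+3 * s)^4/24 + (3/2+3 * s)^5/120 + (3/2+3 * s)^6/720 + (3/2+3 * s)^7/5040 + (3/2+3 * s)^8/40320 + (3/2+3 * s)^9/362880 + (3/2+3 * s)^10/3628800 + (3/2+3 * s)^11/39916800 + (3/2+3 * s)^12/479001600)"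
proof -
  have "42/5 * (1 + (3/2+3 * s) + (3/2+3 * s)^2/2 + (3/2+3 * s)^3/6 + (3/2+3 * s)^4/24 + (3/2+3 * s)^5/120 + (3/2+3 * s)^6/720 + (3/2+3 * s)^7/5040 + (3/2+3 * s)^8/40320 + (3/2+3 * s)^9/362880 + (3/2+3 * s)^10/3628800 + (3/2+3 * s)^11/39916800 + (3/2+3 * s)^12/479001600) - P4 (2 + 3/2 * s) = (54256625729/25952256000) * s^0 * (1-s)^12 + (6165524309/196608000) * s^1 * (1-s)^11 + (1071541283/5242880) * s^2 * (1-s)^10 + (18269863579/23592960) * s^3 * (1-s)^9 + (102880537729/52428800) * s^4 * (1-s)^8 + (122437041447/32768000) * s^5 * (1-s)^7 + (1164588497159/196608000) * s^6 * (1-s)^6 + (52745934491/6553600) * s^7 * (1-s)^5 + (18386908137/2097152) * s^8 * (1-s)^4 + (817642168487/117964800) * s^9 * (1-s)^3 + (1419889533121/393216000) * s^10 * (1-s)^2 + (789024981677/720896000) * s^11 * (1-s)^1 + (68736793991/471859200) * s^12 * (1-s)^0"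
    unfolding P4_def P3_def P2_def by algebra
  moreover have "0 \<le> (54256625729/25952256000) * s^0 * (1-s)^12 + (6165524309/196608000) * s^1 * (1-s)^11 + (1071541283/5242880) * s^2 * (1-s)^10 + (18269863579/23592960) * s^3 * (1-s)^9 + (102880537729/52428800) * s^4 * (1-s)^8 + (122437041447/32768000) * s^5 * (1-s)^7 + (1164588497159/196608000) * s^6 * (1-s)^6 + (52745934491/6553600) * s^7 * (1-s)^5 + (18386908137/2097152) * s^8 * (1-s)^4 + (817642168487/117964800) * s^9 * (1-s)^3 + (1419889533121/393216000) * s^10 * (1-s)^2 + (789024981677/720896000) * s^11 * (1-s)^1 + (68736793991/471859200) * s^12 * (1-s)^0"
    using s by (intro add_nonneg_nonneg mult_nonneg_nonneg zero_le_power) auto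
  ultimately show ?thesis by linarith
qed


lemma bound2:
  fixes t :: real
  assumes t: "0 \<le> t"
  shows "exp (-2 * t) * P2 t \<le> 32 / exp 4"
proof -
  have "exp (-2 * t) * P2 t \<le> exp (-2*2) * P2 2"
  proof (rule peak[where \<phi>="\<lambda>x. exp (-2 * x) * P2 x" and \<phi>'="\<lambda>x. exp (-2 * x) * (-8 * x * (x-1)^2 * (x-2))"
        and a=0 and m=2 and b="t+1"])
    show "((\<lambda>x. exp (-2 * x) * P2 x) has_real_derivative exp (-2 * x) * (-8 * x * (x-1)^2 * (x-2))) (at x)" for x
      by (rule d2)
  next
    fix x :: real assume x: "0 < x" "x < 2"
    have e: "-8 * x * (x-1)^2 * (x-2) = 8 * x * (x-1)^2 * (2-x)" by algebra
    have "0 \<le> 8 * x * (x-1)^2 * (2-x)" using x by (intro mult_nonneg_nonneg) auto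
    then show "0 \<le> exp (-2 * x) * (-8 * x * (x-1)^2 * (x-2))" unfolding e by simp
  next
    fix x :: real assume x: "2 < x" "x < t + 1"
    have e: "-8 * x * (x-1)^2 * (x-2) = -(8 * x * (x-1)^2 * (x-2))" by algebra
    have "0 \<le> 8 * x * (x-1)^2 * (x-2)" using x by (intro mult_nonneg_nonneg) auto
    then show "exp (-2 * x) * (-8 * x * (x-1)^2 * (x-2)) \<le> 0" unfolding e
      by (simp add: mult_nonneg_nonpos)
  qed (use t in auto)
  also have "\<dots> = 32 / exp 4" by (simp add: P2_def exp_minus field_simps)
  finally show ?thesis .
qed

lemma bound3:
  fixes t :: real
  assumes t: "0 \<le> t"
  shows "exp (-2 * t) * P3 t \<le> 27 / (2 * exp 3)"
proof -
  have P3c: "P3 (3/2) = 27/2" by (simp add: P3_def P2_def power2_eq_square)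
  have val: "exp (-2 * (3/2)) * P3 (3/2) = 27 / (2 * exp 3)" by (simp add: P3c exp_minus field_simps)
  show ?thesis
  proof (cases "t \<le> 3")
    case True
    have "exp (-2 * t) * P3 t \<le> exp (-2 * (3/2)) * P3 (3/2)"
    proof (rule peak[where \<phi>="\<lambda>x. exp (-2 * x) * P3 x"
          and \<phi>'="\<lambda>x. exp (-2 * x) * (x * (2 * x-3) * (x-3) * (8/9) * (3 - 9 * x + 9 * x^2 - 2 * x^3))"
          and a=0 and m="3/2" and b=3])
      show "((\<lambda>x. exp (-2 * x) * P3 x) has_real_derivative exp (-2 * x) * (x * (2 * x-3) * (x-3) * (8/9) * (3 - 9 * x + 9 * x^2 - 2 * x^3))) (at x)" for x
        by (rule d3)
    next
      fix x :: real assume x: "0 < x" "x < 3/2"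
      have g: "0 \<le> 3 - 9 * x + 9 * x^2 - 2 * x^3" using x by (intro g3_nonneg) auto
      have "x * (2 * x-3) \<le> 0" using x by (intro mult_nonneg_nonpos) auto
      then have "0 \<le> x * (2 * x-3) * (x-3)" using x by (intro mult_nonpos_nonpos) auto
      then have "0 \<le> x * (2 * x-3) * (x-3) * (8/9) * (3 - 9 * x + 9 * x^2 - 2 * x^3)" using g by simp
      then show "0 \<le> exp (-2 * x) * (x * (2 * x-3) * (x-3) * (8/9) * (3 - 9 * x + 9 * x^2 - 2 * x^3))" by simp
    next
      fix x :: real assume x: "3/2 < x" "x < 3"
      have g: "0 \<le> 3 - 9 * x + 9 * x^2 - 2 * x^3" using x by (intro g3_nonneg) auto
      have "0 \<le> x * (2 * x-3)" using x by (intro mult_nonneg_nonneg) auto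
      then have "x * (2 * x-3) * (x-3) \<le> 0" using x by (intro mult_nonneg_nonpos) auto
      then have "x * (2 * x-3) * (x-3) * (8/9) * (3 - 9 * x + 9 * x^2 - 2 * x^3) \<le> 0" using g
        by (simp add: mult_nonpos_nonneg)
      then show "exp (-2 * x) * (x * (2 * x-3) * (x-3) * (8/9) * (3 - 9 * x + 9 * x^2 - 2 * x^3)) \<le> 0"
        by (simp add: mult_nonneg_nonpos)
    qed (use t True in auto)
    then show ?thesis using val by simp
  next
    case False
    define u where "u = t - 3"
    have u: "0 \<le> u" using False by (simp add: u_def)
    have "P3 t \<le> 27/2 * (1 + (3+2 * u) + (3+2 * u)^2/2 + (3+2 * u)^3/6 + (3+2 * u)^4/24 + (3+2 * u)^5/120 + (3+2 * u)^6/720 + (3+2 * u)^7/5040)"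
      using tail3[OF u] by (simp add: u_def)
    also have "\<dots> \<le> 27/2 * exp (3+2 * u)"
      using exp_T7[of "3+2 * u"] u by simp
    finally have "exp (-2 * t) * P3 t \<le> exp (-2 * t) * (27/2 * exp (3+2 * u))"
      by simp
    also have "\<dots> = 27/2 * exp (-3)" by (simp add: u_def flip: exp_add)
    also have "\<dots> = 27 / (2 * exp 3)" by (simp add: exp_minus field_simps)
    finally show ?thesis .
  qed
qed


lemma P4_t0: "P4 (3 - sqrt 3) = 96 * (33 - 19 * sqrt 3)"
proof -
  have sq: "(sqrt 3)^2 = (3::real)" by simp
  have "\<And>s::real. P4 (3 - s) - 96 * (33 - 19 * s) = (s^2 - 3) * (972 + (-456) * s + (596/3) * s^2 + (-248/3) * s^3 + (244/9) * s^4 + (-16/3) * s^5 + (4/9) * s^6)"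
    unfolding P4_def P3_def P2_def by algebra
  then have "P4 (3 - sqrt 3) - 96 * (33 - 19 * sqrt 3) = 0" using sq by simp
  then show ?thesis by simp
qed

lemma P4_tail:
  fixes t :: real
  assumes t: "2 \<le> t"
  shows "P4 t \<le> 42/5 * exp (2 * t - 5/2)"
proof (cases "t \<le> 7/2")
  case True
  define s where "s = (t - 2) * 2 / 3"
  have s: "0 \<le> s" "s \<le> 1" using t True by (auto simp: s_def)
  have e1: "2 + 3/2 * s = t" and e2: "3/2 + 3 * s = 2 * t - 5/2" by (simp_all add: s_def field_simps)
  have "P4 t \<le> 42/5 * (1 + (2 * t - 5/2) + (2 * t - 5/2)^2/2 + (2 * t - 5/2)^3/6 + (2 * t - 5/2)^4/24 + (2 * t - 5/2)^5/120 + (2 * t - 5/2)^6/720 + (2 * t - 5/2)^7/5040 + (2 * t - 5/2)^8/40320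
     + (2 * t - 5/2)^9/362880 + (2 * t - 5/2)^10/3628800 + (2 * t - 5/2)^11/39916800 + (2 * t - 5/2)^12/479001600)"
    using tail4a[OF s] unfolding e1 e2 .
  also have "\<dots> \<le> 42/5 * exp (2 * t - 5/2)"
    using exp_T12[of "2 * t - 5/2"] t by simp
  finally show ?thesis .
next
  case False
  define u where "u = t - 7/2"
  have u: "0 \<le> u" using False by (simp add: u_def)
  have e1: "7/2 + u = t" and e2: "9/2 + 2 * u = 2 * t - 5/2" by (simp_all add: u_def field_simps)
  have "P4 t \<le> 42/5 * (1 + (2 * t - 5/2) + (2 * t - 5/2)^2/2 + (2 * t - 5/2)^3/6 + (2 * t - 5/2)^4/24 + (2 * t - 5/2)^5/120 + (2 * t - 5/2)^6/720 + (2 * t - 5/2)^7/5040 + (2 * t - 5/2)^8/40320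
     + (2 * t - 5/2)^9/362880 + (2 * t - 5/2)^10/3628800 + (2 * t - 5/2)^11/39916800 + (2 * t - 5/2)^12/479001600)"
    using tail4b[OF u] unfolding e1 e2 .
  also have "\<dots> \<le> 42/5 * exp (2 * t - 5/2)"
    using exp_T12[of "2 * t - 5/2"] t by simp
  finally show ?thesis .
qed

lemma bound4:
  fixes t :: real
  assumes t: "0 \<le> t"
  shows "exp (-2 * t) * P4 t \<le> 96 * (33 - 19 * sqrt 3) * exp (2 * sqrt 3) / exp 6"
proof -
  define t0 where "t0 = 3 - sqrt 3"
  have s3: "sqrt 3 < 7/4"
    by (rule real_less_lsqrt) (auto simp: power2_eq_square)
  have s1: "1 < sqrt (3::real)" by simp
  have t0: "5/4 < t0" "t0 < 2" using s3 s1 by (auto simp: t0_def)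
  have pk: "exp (-2 * x) * P4 x \<le> exp (-2 * t0) * P4 t0" if x: "0 \<le> x" "x \<le> 2" for x
  proof (rule peak[where \<phi>="\<lambda>x. exp (-2 * x) * P4 x"
        and \<phi>'="\<lambda>x. exp (-2 * x) * (x * (x^2-6 * x+6) * (x-2) * (-8/9) * (x^4-8 * x^3+18 * x^2-12 * x+3))"
        and a=0 and m=t0 and b=2])
    show "((\<lambda>x. exp (-2 * x) * P4 x) has_real_derivative exp (-2 * x) * (x * (x^2-6 * x+6) * (x-2) * (-8/9) * (x^4-8 * x^3+18 * x^2-12 * x+3))) (at x)" for x
      by (rule d4)
  next
    fix x :: real assume x: "0 < x" "x < t0"
    have g: "0 \<le> x^4-8 * x^3+18 * x^2-12 * x+3" using x t0 by (intro g4_nonneg) auto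
    have "sqrt 3 \<le> 3 - x" using x by (simp add: t0_def)
    then have "(sqrt 3)^2 \<le> (3 - x)^2" by (intro power_mono) auto
    then have q: "0 \<le> x^2-6 * x+6" by (simp add: power2_eq_square algebra_simps)
    have "0 \<le> x * (x^2-6 * x+6)" using x q by simp
    then have "x * (x^2-6 * x+6) * (x-2) \<le> 0" using x t0 by (intro mult_nonneg_nonpos) auto
    then have "0 \<le> x * (x^2-6 * x+6) * (x-2) * (-8/9)" by (intro mult_nonpos_nonpos) auto
    then have "0 \<le> x * (x^2-6 * x+6) * (x-2) * (-8/9) * (x^4-8 * x^3+18 * x^2-12 * x+3)"
      using mult_nonneg_nonneg g by blast
    then show "0 \<le> exp (-2 * x) * (x * (x^2-6 * x+6) * (x-2) * (-8/9) * (x^4-8 * x^3+18 * x^2-12 * x+3))"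
      by (rule mult_nonneg_nonneg[OF exp_ge_zero])
  next
    fix x :: real assume x: "t0 < x" "x < 2"
    have g: "0 \<le> x^4-8 * x^3+18 * x^2-12 * x+3" using x t0 by (intro g4_nonneg) auto
    have "3 - x \<le> sqrt 3" "0 \<le> 3 - x" using x by (auto simp: t0_def)
    then have "(3 - x)^2 \<le> (sqrt 3)^2" by (intro power_mono) auto
    then have q: "x^2-6 * x+6 \<le> 0" by (simp add: power2_eq_square algebra_simps)
    have "x * (x^2-6 * x+6) \<le> 0" using x t0 q by (intro mult_nonneg_nonpos) auto
    then have "0 \<le> x * (x^2-6 * x+6) * (x-2)" using x by (intro mult_nonpos_nonpos) auto
    then have "x * (x^2-6 * x+6) * (x-2) * (-8/9) \<le> 0" by (intro mult_nonneg_nonpos) auto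
    then have "x * (x^2-6 * x+6) * (x-2) * (-8/9) * (x^4-8 * x^3+18 * x^2-12 * x+3) \<le> 0"
      using mult_nonpos_nonneg g by blast
    then show "exp (-2 * x) * (x * (x^2-6 * x+6) * (x-2) * (-8/9) * (x^4-8 * x^3+18 * x^2-12 * x+3)) \<le> 0"
      by (rule mult_nonneg_nonpos[OF exp_ge_zero])
  qed (use x in auto)
  have val: "exp (-2 * t0) * P4 t0 = 96 * (33 - 19 * sqrt 3) * exp (2 * sqrt 3) / exp 6"
  proof -
    have "exp (-2 * t0) = exp (2 * sqrt 3) / exp 6" by (simp add: t0_def algebra_simps flip: exp_diff)
    then show ?thesis by (simp add: t0_def P4_t0)
  qed
  show ?thesis
  proof (cases "t \<le> 2")
    case True
    then show ?thesis using pk[OF t True] val by simp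
  next
    case False
    have "exp (-2 * t) * P4 t \<le> exp (-2 * t) * (42/5 * exp (2 * t - 5/2))"
      using P4_tail[of t] False by simp
    also have "\<dots> = 42/5 * exp (-2 * (5/4))" by (simp flip: exp_add)
    also have "\<dots> \<le> exp (-2 * (5/4)) * P4 (5/4)"
    proof -
      have "42/5 \<le> P4 (5/4)" by (simp add: P4_def P3_def P2_def power2_eq_square power3_eq_cube)
      then show ?thesis by simp
    qed
    also have "\<dots> \<le> exp (-2 * t0) * P4 t0" using pk[of "5/4"] by simp
    finally show ?thesis using val by simp
  qed
qed

lemma eq4: "exp (-2 * (3 - sqrt 3)) * P4 (3 - sqrt 3) = 96 * (33 - 19 * sqrt 3) * exp (2 * sqrt 3) / exp 6"
proof -
  have "exp (-2 * (3 - sqrt 3)) = exp (2 * sqrt 3) / exp 6" by (simp add: algebra_simps flip: exp_diff)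
  then show ?thesis by (simp add: P4_t0)
qed

lemma eq3: "exp (-2 * (3/2)) * P3 (3/2) = 27 / (2 * exp 3)"
  by (simp add: P3_def P2_def power2_eq_square exp_minus field_simps)

lemma eq2: "exp (-2*2) * P2 2 = 32 / exp 4"
  by (simp add: P2_def exp_minus field_simps)


lemma ext_sum2: "(\<Sum>j\<in>{1..2}. (cmod (taylor_coeff (extremal t) j))\<^sup>2) = exp (-2 * t) * P2 t"
proof -
  have e: "exp (-2 * t) = (exp (-t))^2" by (simp add: power2_eq_square flip: exp_add)
  have s: "{1..2::nat} = {1,2}" by auto
  have "(\<Sum>j\<in>{1..2}. (cmod (taylor_coeff (extremal t) j))\<^sup>2) =
     (cmod (taylor_coeff (extremal t) 1))\<^sup>2 + (cmod (taylor_coeff (extremal t) 2))\<^sup>2"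
    unfolding s by simp
  also have "\<dots> = (2 * t * exp(-t))^2 + (2 * t * (t-1) * exp(-t))^2"
    unfolding ext_coeffs norm_of_real power2_abs ..
  also have "\<dots> = exp (-2 * t) * P2 t" unfolding e P2_def by algebra
  finally show ?thesis .
qed

lemma ext_sum3: "(\<Sum>j\<in>{1..3}. (cmod (taylor_coeff (extremal t) j))\<^sup>2) = exp (-2 * t) * P3 t"
proof -
  have e: "exp (-2 * t) = (exp (-t))^2" by (simp add: power2_eq_square flip: exp_add)
  have s: "{1..3::nat} = {1,2,3}" by auto
  have "(\<Sum>j\<in>{1..3}. (cmod (taylor_coeff (extremal t) j))\<^sup>2) =
     (cmod (taylor_coeff (extremal t) 1))\<^sup>2 + (cmod (taylor_coeff (extremal t) 2))\<^sup>2
     + (cmod (taylor_coeff (extremal t) 3))\<^sup>2"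
    unfolding s by simp
  also have "\<dots> = (2 * t * exp(-t))^2 + (2 * t * (t-1) * exp(-t))^2
      + (2 * t * (2 * t^2 - 6 * t + 3) / 3 * exp (-t))^2"
    unfolding ext_coeffs norm_of_real power2_abs ..
  also have "\<dots> = exp (-2 * t) * P3 t" unfolding e P3_def P2_def by algebra
  finally show ?thesis .
qed

lemma ext_sum4: "(\<Sum>j\<in>{1..4}. (cmod (taylor_coeff (extremal t) j))\<^sup>2) = exp (-2 * t) * P4 t"
proof -
  have e: "exp (-2 * t) = (exp (-t))^2" by (simp add: power2_eq_square flip: exp_add)
  have s: "{1..4::nat} = {1,2,3,4}" by auto
  have "(\<Sum>j\<in>{1..4}. (cmod (taylor_coeff (extremal t) j))\<^sup>2) =
     (cmod (taylor_coeff (extremal t) 1))\<^sup>2 + (cmod (taylor_coeff (extremal t) 2))\<^sup>2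
     + (cmod (taylor_coeff (extremal t) 3))\<^sup>2 + (cmod (taylor_coeff (extremal t) 4))\<^sup>2"
    unfolding s by simp
  also have "\<dots> = (2 * t * exp(-t))^2 + (2 * t * (t-1) * exp(-t))^2
      + (2 * t * (2 * t^2 - 6 * t + 3) / 3 * exp (-t))^2 + (2 * t * (t^3 - 6 * t^2 + 9 * t - 3) / 3 * exp (-t))^2"
    unfolding ext_coeffs norm_of_real power2_abs ..
  also have "\<dots> = exp (-2 * t) * P4 t" unfolding e P4_def P3_def P2_def by algebra
  finally show ?thesis .
qed

lemma B0_generic:
  assumes f: "f \<in> B0" and B: "0 \<le> B"
    and ext: "\<And>t. t > 0 \<Longrightarrow> (\<Sum>j\<in>{1..n}. (cmod (taylor_coeff (extremal t) j))\<^sup>2) \<le> B"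
  shows "(\<Sum>j\<in>{1..n}. (cmod (taylor_coeff f j))\<^sup>2) \<le> B"
  using B0_reduce[OF f]
proof
  assume z: "\<forall>j\<ge>1. taylor_coeff f j = 0"
  have "(\<Sum>j\<in>{1..n}. (cmod (taylor_coeff f j))\<^sup>2) = 0"
    by (intro sum.neutral) (use z in auto)
  then show ?thesis using B by simp
next
  assume "\<exists>t>0. \<forall>n. (\<Sum>j\<in>{1..n}. (cmod (taylor_coeff f j))\<^sup>2) \<le> (\<Sum>j\<in>{1..n}. (cmod (taylor_coeff (extremal t) j))\<^sup>2)"
  then obtain t where "t > 0" "(\<Sum>j\<in>{1..n}. (cmod (taylor_coeff f j))\<^sup>2) \<le> (\<Sum>j\<in>{1..n}. (cmod (taylor_coeff (extremal t) j))\<^sup>2)"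
    by blast
  then show ?thesis using ext[of t] by linarith
qed

theorem lemma11:
  shows "(\<forall>f\<in>B0. (\<Sum>j\<in>{1..2}. (cmod (taylor_coeff f j))\<^sup>2) \<le> 32 / exp 4)
       \<and> (\<forall>f\<in>B0. (\<Sum>j\<in>{1..3}. (cmod (taylor_coeff f j))\<^sup>2) \<le> 27 / (2 * exp 3))
       \<and> (\<forall>f\<in>B0. (\<Sum>j\<in>{1..4}. (cmod (taylor_coeff f j))\<^sup>2)
              \<le> 96 * (33 - 19 * sqrt 3) * exp (2 * sqrt 3) / exp 6)
       \<and> (\<exists>t>0. (\<Sum>j\<in>{1..2}. (cmod (taylor_coeff (extremal t) j))\<^sup>2) = 32 / exp 4)
       \<and> (\<exists>t>0. (\<Sum>j\<in>{1..3}. (cmod (taylor_coeff (extremal t) j))\<^sup>2) = 27 / (2 * exp 3))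
       \<and> (\<exists>t>0. (\<Sum>j\<in>{1..4}. (cmod (taylor_coeff (extremal t) j))\<^sup>2)
              = 96 * (33 - 19 * sqrt 3) * exp (2 * sqrt 3) / exp 6)"
proof (intro conjI ballI)
  have s3: "sqrt 3 < (33/19::real)"
    by (rule real_less_lsqrt) (auto simp: power2_eq_square)
  have s3': "sqrt 3 < (3::real)"
    by (rule real_less_lsqrt) (auto simp: power2_eq_square)
  have pos4: "0 \<le> 96 * (33 - 19 * sqrt 3) * exp (2 * sqrt 3) / exp 6"
    using s3 by (intro divide_nonneg_pos mult_nonneg_nonneg) auto
  fix f assume f: "f \<in> B0"
  show "(\<Sum>j\<in>{1..2}. (cmod (taylor_coeff f j))\<^sup>2) \<le> 32 / exp 4"
  proof (rule B0_generic[OF f])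
    show "0 \<le> 32 / exp (4::real)" by simp
    fix t :: real assume "0 < t"
    then show "(\<Sum>j\<in>{1..2}. (cmod (taylor_coeff (extremal t) j))\<^sup>2) \<le> 32 / exp 4"
      unfolding ext_sum2 by (intro bound2) simp
  qed
  show "(\<Sum>j\<in>{1..3}. (cmod (taylor_coeff f j))\<^sup>2) \<le> 27 / (2 * exp 3)"
  proof (rule B0_generic[OF f])
    show "0 \<le> 27 / (2 * exp (3::real))" by simp
    fix t :: real assume "0 < t"
    then show "(\<Sum>j\<in>{1..3}. (cmod (taylor_coeff (extremal t) j))\<^sup>2) \<le> 27 / (2 * exp 3)"
      unfolding ext_sum3 by (intro bound3) simp
  qed
  show "(\<Sum>j\<in>{1..4}. (cmod (taylor_coeff f j))\<^sup>2) \<le> 96 * (33 - 19 * sqrt 3) * exp (2 * sqrt 3) / exp 6"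
  proof (rule B0_generic[OF f pos4])
    fix t :: real assume "0 < t"
    then show "(\<Sum>j\<in>{1..4}. (cmod (taylor_coeff (extremal t) j))\<^sup>2) \<le> 96 * (33 - 19 * sqrt 3) * exp (2 * sqrt 3) / exp 6"
      unfolding ext_sum4 by (intro bound4) simp
  qed
next
  have h2: "(\<Sum>j\<in>{1..2}. (cmod (taylor_coeff (extremal 2) j))\<^sup>2) = 32 / exp 4"
    unfolding ext_sum2 by (rule eq2)
  show "\<exists>t>0. (\<Sum>j\<in>{1..2}. (cmod (taylor_coeff (extremal t) j))\<^sup>2) = 32 / exp 4"
    by (rule exI[of _ 2], rule conjI[OF _ h2]) simp
  have h3: "(\<Sum>j\<in>{1..3}. (cmod (taylor_coeff (extremal (3/2)) j))\<^sup>2) = 27 / (2 * exp 3)"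
    unfolding ext_sum3 by (rule eq3)
  show "\<exists>t>0. (\<Sum>j\<in>{1..3}. (cmod (taylor_coeff (extremal t) j))\<^sup>2) = 27 / (2 * exp 3)"
    by (rule exI[of _ "3/2"], rule conjI[OF _ h3]) simp
  have s3': "sqrt 3 < (3::real)"
    by (rule real_less_lsqrt) (auto simp: power2_eq_square)
  have h4: "(\<Sum>j\<in>{1..4}. (cmod (taylor_coeff (extremal (3 - sqrt 3)) j))\<^sup>2)
              = 96 * (33 - 19 * sqrt 3) * exp (2 * sqrt 3) / exp 6"
    unfolding ext_sum4 by (rule eq4)
  show "\<exists>t>0. (\<Sum>j\<in>{1..4}. (cmod (taylor_coeff (extremal t) j))\<^sup>2)
              = 96 * (33 - 19 * sqrt 3) * exp (2 * sqrt 3) / exp 6"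
    by (rule exI[of _ "3 - sqrt 3"], rule conjI[OF _ h4]) (use s3' in simp)
qed

end
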